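(* Let $K$, $I$, $I'$, $\lambda_0$ and $f_2^{\mathrm{tr}}$ be as in the context, and suppose $\mathbb P(I\cap I'\ne\emptyset)<1$. Then $\sup_{\mathrm{tr}\in\mathbb N}\mathrm{tr}\,f_2^{\mathrm{tr}}(\lambda)<\infty$ for all $\lambda<\lambda_0$.
   Context: Let $K$ be a probability distribution on $\mathbb N=\{1,2,\dots\}$ (with $\lim_{n\to\infty}\log K(n)/\log n=-(1+\alpha)$ for some $\alpha\in[0,\infty)$). Let $I$ and $I'$ be the sets of renewal times in $\mathbb N$ (excluding $0$) of two independent renewal processes started at $0$ with inter-arrival law $K$, and $\lambda_0:=-\log\mathbb P(I\cap I'\ne\emptyset)$. For $\mathrm{tr}\in\mathbb N$ let $K^{\mathrm{tr}}(n)=K(n)$ for $1\le n\le\mathrm{tr}-1$, $K^{\mathrm{tr}}(\mathrm{tr})=\sum_{m\ge\mathrm{tr}}K(m)$, $K^{\mathrm{tr}}(n)=0$ for $n>\mathrm{tr}$. Let $J,J'\subseteq\mathbb N_0$ be the renewal sets (containing $0$) of two independent renewal processes started at $0$ with inter-arrival law $K^{\mathrm{tr}}$, and define $f_2^{\mathrm{tr}}(\lambda):=\lim_{n\to\infty}\frac1n\log E\big[\exp\big(\lambda\sum_{k=0}^{n-1}1_{\{k\in J\cap J'\}}\big)\big]$. *)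

theory Defs
  imports "HOL-Probability.Probability"
begin

text \<open>Renewal sets. A renewal process with inter-arrival law K is modelled by an
  i.i.d. stream of inter-arrival times (law K); the renewal times are the partial sums.\<close>

definition renewal_set_pos :: "nat stream \<Rightarrow> nat set" where
  "renewal_set_pos \<omega> = {sum_list (stake (Suc k) \<omega>) | k. True}"

definition renewal_set0 :: "nat stream \<Rightarrow> nat set" where
  "renewal_set0 \<omega> = {sum_list (stake k \<omega>) | k. True}"

definition two_renewals :: "nat pmf \<Rightarrow> (nat stream \<times> nat stream) measure" where
  "two_renewals K = stream_space (measure_pmf K) \<Otimes>\<^sub>M stream_space (measure_pmf K)"

definition p_intersect :: "nat pmf \<Rightarrow> real" where
  "p_intersect K = measure (two_renewals K)
     {\<omega> \<in> space (two_renewals K). renewal_set_pos (fst \<omega>) \<inter> renewal_set_pos (snd \<omega>) \<noteq> {}}"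

definition lambda0 :: "nat pmf \<Rightarrow> real" where
  "lambda0 K = - ln (p_intersect K)"

definition trunc_pmf :: "nat pmf \<Rightarrow> nat \<Rightarrow> nat pmf" where
  "trunc_pmf K tr = map_pmf (\<lambda>n. min n tr) K"

definition f2 :: "nat pmf \<Rightarrow> nat \<Rightarrow> real \<Rightarrow> real" where
  "f2 K tr lam = lim (\<lambda>n. ln (integral\<^sup>L (two_renewals (trunc_pmf K tr))
        (\<lambda>\<omega>. exp (lam * real (card {k. k < n \<and> k \<in> renewal_set0 (fst \<omega>) \<inter> renewal_set0 (snd \<omega>)}))))
        / real n)"

end

theory Submission
  imports Defs
begin


abbreviation SM :: "nat pmf \<Rightarrow> nat stream measure" where
  "SM M \<equiv> stream_space (measure_pmf M)"

lemma prob_SM: "prob_space (SM M)"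
  by (rule prob_space.prob_space_stream_space) (rule measure_pmf.prob_space_axioms)

lemma space_SM[simp]: "space (SM M) = UNIV"
  by (simp add: space_stream_space)

lemma meas_stake_SM[measurable]: "stake i \<in> measurable (SM M) (count_space UNIV)"
  by measurable

lemma split_SS:
  fixes \<Phi> :: "nat list \<Rightarrow> nat stream \<Rightarrow> ennreal"
  assumes [measurable]: "case_prod \<Phi> \<in> borel_measurable (count_space UNIV \<Otimes>\<^sub>M SM M)"
  shows "(\<integral>\<^sup>+\<omega>. \<Phi> (stake i \<omega>) (sdrop i \<omega>) \<partial>SM M) = (\<integral>\<^sup>+\<omega>. \<integral>\<^sup>+\<eta>. \<Phi> (stake i \<omega>) \<eta> \<partial>SM M \<partial>SM M)"
  using assms
proof (induction i arbitrary: \<Phi>)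
  case 0
  interpret P: prob_space "SM M" by (rule prob_SM)
  have [measurable]: "\<Phi> [] \<in> borel_measurable (SM M)"
    using 0 by measurable
  show ?case using P.emeasure_space_1 by (simp add: nn_integral_const)
next
  case (Suc i)
  interpret P: prob_space "SM M" by (rule prob_SM)
  note Suc.prems[measurable]
  have "(\<integral>\<^sup>+\<omega>. \<Phi> (stake (Suc i) \<omega>) (sdrop (Suc i) \<omega>) \<partial>SM M)
      = (\<integral>\<^sup>+x. (\<integral>\<^sup>+\<omega>. \<Phi> (x # stake i \<omega>) (sdrop i \<omega>) \<partial>SM M) \<partial>measure_pmf M)"
    by (subst prob_space.nn_integral_stream_space[OF measure_pmf.prob_space_axioms]) auto
  also have "\<dots> = (\<integral>\<^sup>+x. (\<integral>\<^sup>+\<omega>. \<integral>\<^sup>+\<eta>. \<Phi> (x # stake i \<omega>) \<eta> \<partial>SM M \<partial>SM M) \<partial>measure_pmf M)"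
    by (intro nn_integral_cong Suc.IH) measurable
  also have "\<dots> = (\<integral>\<^sup>+\<omega>. \<integral>\<^sup>+\<eta>. \<Phi> (stake (Suc i) \<omega>) \<eta> \<partial>SM M \<partial>SM M)"
    by (subst prob_space.nn_integral_stream_space[OF measure_pmf.prob_space_axioms]) auto
  finally show ?case .
qed

lemma meas_G[measurable]:
  fixes G :: "nat list \<times> nat list \<Rightarrow> ennreal"
  shows "(\<lambda>\<omega>. G (stake i (fst \<omega>), stake j (snd \<omega>))) \<in> borel_measurable (SM M \<Otimes>\<^sub>M SM M)"
proof -
  have G: "G \<in> borel_measurable (count_space UNIV \<Otimes>\<^sub>M count_space UNIV)"
    by (simp add: pair_measure_countable)
  have "(\<lambda>\<omega>. (stake i (fst \<omega>), stake j (snd \<omega>))) \<in> measurable (SM M \<Otimes>\<^sub>M SM M) (count_space UNIV \<Otimes>\<^sub>M count_space UNIV)"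
    by measurable
  from measurable_compose[OF this G] show ?thesis by (simp add: o_def)
qed

lemma pair_indep:
  fixes G :: "nat list \<times> nat list \<Rightarrow> ennreal"
  assumes h[measurable]: "h \<in> borel_measurable (SM M \<Otimes>\<^sub>M SM M)"
  shows "(\<integral>\<^sup>+\<omega>. G (stake i (fst \<omega>), stake j (snd \<omega>)) * h (sdrop i (fst \<omega>), sdrop j (snd \<omega>)) \<partial>(SM M \<Otimes>\<^sub>M SM M))
     = (\<integral>\<^sup>+\<omega>. G (stake i (fst \<omega>), stake j (snd \<omega>)) \<partial>(SM M \<Otimes>\<^sub>M SM M)) * integral\<^sup>N (SM M \<Otimes>\<^sub>M SM M) h"
proof -
  interpret P: prob_space "SM M" by (rule prob_SM)
  define H where "H \<eta> = (\<integral>\<^sup>+\<eta>'. h (\<eta>, \<eta>') \<partial>SM M)" for \<eta>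
  define Gb where "Gb a = (\<integral>\<^sup>+b. G (stake i a, stake j b) \<partial>SM M)" for a
  have [measurable]: "H \<in> borel_measurable (SM M)" unfolding H_def by measurable
  have mG2[measurable]: "(\<lambda>(a, b). G (stake i a, stake j b)) \<in> borel_measurable (SM M \<Otimes>\<^sub>M SM M)"
    using meas_G[of G i j M] by (simp add: case_prod_beta')
  have [measurable]: "Gb \<in> borel_measurable (SM M)" unfolding Gb_def by measurable
  define \<Psi> where "\<Psi> l \<eta> = (\<integral>\<^sup>+b. G (l, stake j b) * h (\<eta>, sdrop j b) \<partial>SM M)" for l \<eta>
  have mG3: "(\<lambda>((l::nat list, \<eta>::nat stream), b). G (l, stake j b)) \<in> borel_measurable ((count_space UNIV \<Otimes>\<^sub>M SM M) \<Otimes>\<^sub>M SM M)"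
  proof -
    have G: "G \<in> borel_measurable (count_space UNIV \<Otimes>\<^sub>M count_space UNIV)"
      by (simp add: pair_measure_countable)
    have "(\<lambda>x. (fst (fst x) :: nat list, stake j (snd x))) \<in> measurable ((count_space UNIV \<Otimes>\<^sub>M SM M) \<Otimes>\<^sub>M SM M) (count_space UNIV \<Otimes>\<^sub>M count_space UNIV)"
      by measurable
    from measurable_compose[OF this G] show ?thesis by (simp add: o_def case_prod_beta')
  qed
  have [measurable]: "case_prod \<Psi> \<in> borel_measurable (count_space UNIV \<Otimes>\<^sub>M SM M)"
    unfolding \<Psi>_def using mG3 by measurable
  have "(\<integral>\<^sup>+\<omega>. G (stake i (fst \<omega>), stake j (snd \<omega>)) * h (sdrop i (fst \<omega>), sdrop j (snd \<omega>)) \<partial>(SM M \<Otimes>\<^sub>M SM M))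
     = (\<integral>\<^sup>+a. \<integral>\<^sup>+b. G (stake i a, stake j b) * h (sdrop i a, sdrop j b) \<partial>SM M \<partial>SM M)"
  proof -
    have mh: "(\<lambda>\<omega>. h (sdrop i (fst \<omega>), sdrop j (snd \<omega>))) \<in> borel_measurable (SM M \<Otimes>\<^sub>M SM M)"
      by measurable
    have "(\<lambda>\<omega>. G (stake i (fst \<omega>), stake j (snd \<omega>)) * h (sdrop i (fst \<omega>), sdrop j (snd \<omega>))) \<in> borel_measurable (SM M \<Otimes>\<^sub>M SM M)"
      using meas_G[of G i j M] mh by (rule borel_measurable_times_ennreal)
    then show ?thesis by (subst P.nn_integral_fst[symmetric]) simp_all
  qed
  also have "\<dots> = (\<integral>\<^sup>+a. \<Psi> (stake i a) (sdrop i a) \<partial>SM M)"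
    unfolding \<Psi>_def ..
  also have "\<dots> = (\<integral>\<^sup>+a. \<integral>\<^sup>+\<eta>. \<Psi> (stake i a) \<eta> \<partial>SM M \<partial>SM M)"
    by (rule split_SS) measurable
  also have "\<dots> = (\<integral>\<^sup>+a. \<integral>\<^sup>+\<eta>. Gb a * H \<eta> \<partial>SM M \<partial>SM M)"
  proof (intro nn_integral_cong)
    fix a \<eta>
    have "\<Psi> (stake i a) \<eta> = (\<integral>\<^sup>+b. \<integral>\<^sup>+\<eta>'. G (stake i a, stake j b) * h (\<eta>, \<eta>') \<partial>SM M \<partial>SM M)"
      unfolding \<Psi>_def
      by (rule split_SS[where \<Phi>="\<lambda>l \<eta>'. G (stake i a, l) * h (\<eta>, \<eta>')"]) measurable
    also have "\<dots> = (\<integral>\<^sup>+b. G (stake i a, stake j b) * H \<eta> \<partial>SM M)"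
      unfolding H_def by (intro nn_integral_cong nn_integral_cmult) measurable
    also have "\<dots> = Gb a * H \<eta>"
      unfolding Gb_def by (rule nn_integral_multc) measurable
    finally show "\<Psi> (stake i a) \<eta> = Gb a * H \<eta>" .
  qed
  also have "\<dots> = (\<integral>\<^sup>+a. Gb a * (\<integral>\<^sup>+\<eta>. H \<eta> \<partial>SM M) \<partial>SM M)"
    by (intro nn_integral_cong nn_integral_cmult) measurable
  also have "\<dots> = (\<integral>\<^sup>+a. Gb a \<partial>SM M) * (\<integral>\<^sup>+\<eta>. H \<eta> \<partial>SM M)"
    by (rule nn_integral_multc) measurable
  also have "\<dots> = (\<integral>\<^sup>+\<omega>. G (stake i (fst \<omega>), stake j (snd \<omega>)) \<partial>(SM M \<Otimes>\<^sub>M SM M)) * integral\<^sup>N (SM M \<Otimes>\<^sub>M SM M) h"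
    unfolding Gb_def H_def
    using meas_G[of G i j M] h by (subst (1 2) P.nn_integral_fst[symmetric]) simp_all
  finally show ?thesis .
qed

abbreviation R0 where "R0 \<equiv> renewal_set0"

definition psums :: "nat list \<Rightarrow> nat set" where
  "psums xs = {sum_list (take k xs) | k. k < length xs}"

definition fh :: "nat \<Rightarrow> nat list \<Rightarrow> bool" where
  "fh s xs \<longleftrightarrow> sum_list xs = s \<and> (\<forall>k<length xs. sum_list (take k xs) \<noteq> s)"

definition hit :: "nat \<Rightarrow> nat stream \<Rightarrow> nat" where
  "hit s \<omega> = (LEAST i. sum_list (stake i \<omega>) = s)"

lemma psum_add: fixes \<omega> :: "nat stream" shows "sum_list (stake (i + j) \<omega>) = sum_list (stake i \<omega>) + sum_list (stake j (sdrop i \<omega>))"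
  by (simp flip: stake_add)

lemma psum_mono: fixes \<omega> :: "nat stream" assumes "i \<le> j" shows "sum_list (stake i \<omega>) \<le> sum_list (stake j \<omega>)"
proof -
  have "sum_list (stake j \<omega>) = sum_list (stake i \<omega>) + sum_list (stake (j-i) (sdrop i \<omega>))"
    using psum_add[of i "j - i" \<omega>] assms by simp
  then show ?thesis by linarith
qed

lemma fh_stake_iff: "fh s (stake i \<omega>) \<longleftrightarrow> sum_list (stake i \<omega>) = s \<and> (\<forall>k<i. sum_list (stake k \<omega>) \<noteq> s)"
  by (auto simp: fh_def take_stake min_def)

lemma fh_unique: "fh s (stake i \<omega>) \<Longrightarrow> fh s (stake j \<omega>) \<Longrightarrow> i = j"
  by (metis fh_stake_iff linorder_neqE_nat)

lemma in_R0_iff: "s \<in> R0 \<omega> \<longleftrightarrow> (\<exists>i. fh s (stake i \<omega>))"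
proof
  assume "s \<in> R0 \<omega>"
  then obtain i where i: "sum_list (stake i \<omega>) = s" by (auto simp: renewal_set0_def)
  define i0 where "i0 = (LEAST i. sum_list (stake i \<omega>) = s)"
  have "sum_list (stake i0 \<omega>) = s" unfolding i0_def by (rule LeastI[of _ i]) (rule i)
  moreover have "\<forall>k<i0. sum_list (stake k \<omega>) \<noteq> s"
    unfolding i0_def using not_less_Least by blast
  ultimately show "\<exists>i. fh s (stake i \<omega>)" by (auto simp: fh_stake_iff)
qed (auto simp: renewal_set0_def fh_stake_iff)

lemma fh_hit: "fh s (stake i \<omega>) \<Longrightarrow> hit s \<omega> = i"
  unfolding hit_def
  by (rule Least_equality) (auto simp: fh_stake_iff not_less[symmetric])

lemma fh_past: assumes "fh s (stake i \<omega>)" shows "R0 \<omega> \<inter> {..<s} = psums (stake i \<omega>)"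
proof -
  have A: "sum_list (stake i \<omega>) = s" "\<And>k. k < i \<Longrightarrow> sum_list (stake k \<omega>) \<noteq> s"
    using assms by (auto simp: fh_stake_iff)
  show ?thesis
  proof (intro equalityI subsetI)
    fix x assume "x \<in> R0 \<omega> \<inter> {..<s}"
    then obtain k where k: "x = sum_list (stake k \<omega>)" "x < s" by (auto simp: renewal_set0_def)
    have "k < i"
    proof (rule ccontr)
      assume "\<not> k < i" then have "s \<le> x" using psum_mono[of i k \<omega>] A k by simp
      with k show False by simp
    qed
    then show "x \<in> psums (stake i \<omega>)" using k by (auto simp: psums_def take_stake min_def)
  next
    fix x assume "x \<in> psums (stake i \<omega>)"
    then obtain k where k: "k < i" "x = sum_list (stake k \<omega>)" by (auto simp: psums_def take_stake min_def)
    then have "x \<le> s" "x \<noteq> s" using psum_mono[of k i \<omega>] A by auto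
    then show "x \<in> R0 \<omega> \<inter> {..<s}" using k by (auto simp: renewal_set0_def)
  qed
qed

lemma fh_future: assumes "fh s (stake i \<omega>)" shows "{x \<in> R0 \<omega>. s \<le> x} = (+) s ` R0 (sdrop i \<omega>)"
proof -
  have A: "sum_list (stake i \<omega>) = s" "\<And>k. k < i \<Longrightarrow> sum_list (stake k \<omega>) \<noteq> s"
    using assms by (auto simp: fh_stake_iff)
  show ?thesis
  proof (intro equalityI subsetI)
    fix x assume "x \<in> {x \<in> R0 \<omega>. s \<le> x}"
    then obtain k where k: "x = sum_list (stake k \<omega>)" "s \<le> x" by (auto simp: renewal_set0_def)
    have "i \<le> k"
    proof (rule ccontr)
      assume "\<not> i \<le> k" then have "k < i" by simp
      then have "x \<le> s" "x \<noteq> s" using psum_mono[of k i \<omega>] A(1) A(2)[of k] k(1) by auto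
      with k show False by simp
    qed
    then have "x = s + sum_list (stake (k - i) (sdrop i \<omega>))"
      using psum_add[of i "k - i" \<omega>] A k by simp
    then show "x \<in> (+) s ` R0 (sdrop i \<omega>)" by (auto simp: renewal_set0_def)
  next
    fix x assume "x \<in> (+) s ` R0 (sdrop i \<omega>)"
    then obtain j where "x = s + sum_list (stake j (sdrop i \<omega>))" by (auto simp: renewal_set0_def)
    then have "x = sum_list (stake (i + j) \<omega>)" using psum_add[of i j \<omega>] A by simp
    then show "x \<in> {x \<in> R0 \<omega>. s \<le> x}" using psum_mono[of i "i+j" \<omega>] A by (auto simp: renewal_set0_def)
  qed
qed

lemma zero_R0[simp]: "0 \<in> R0 \<omega>"
  unfolding renewal_set0_def by (auto intro!: exI[of _ 0])

abbreviation S2 :: "nat pmf \<Rightarrow> (nat stream \<times> nat stream) measure" where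
  "S2 M \<equiv> SM M \<Otimes>\<^sub>M SM M"

definition Cset :: "nat stream \<times> nat stream \<Rightarrow> nat set" where
  "Cset \<omega> = R0 (fst \<omega>) \<inter> R0 (snd \<omega>)"

definition shift2 :: "nat \<Rightarrow> nat stream \<times> nat stream \<Rightarrow> nat stream \<times> nat stream" where
  "shift2 s \<omega> = (sdrop (hit s (fst \<omega>)) (fst \<omega>), sdrop (hit s (snd \<omega>)) (snd \<omega>))"

lemma markov_pointwise:
  fixes s :: nat and \<omega> :: "nat stream \<times> nat stream" and g :: "nat set \<Rightarrow> ennreal" and h :: "nat stream \<times> nat stream \<Rightarrow> ennreal"
  defines "G \<equiv> \<lambda>xs ys. if fh s xs \<and> fh s ys then g (psums xs \<inter> psums ys) else 0"
  shows "g (Cset \<omega> \<inter> {..<s}) * indicator {\<omega>. s \<in> Cset \<omega>} \<omega> * h (shift2 s \<omega>)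
     = (\<Sum>i. \<Sum>j. G (stake i (fst \<omega>)) (stake j (snd \<omega>)) * h (sdrop i (fst \<omega>), sdrop j (snd \<omega>)))"
proof (cases "s \<in> Cset \<omega>")
  case True
  then obtain i0 j0 where i0: "fh s (stake i0 (fst \<omega>))" and j0: "fh s (stake j0 (snd \<omega>))"
    by (auto simp: Cset_def in_R0_iff)
  have inner: "(\<Sum>j. G (stake i (fst \<omega>)) (stake j (snd \<omega>)) * h (sdrop i (fst \<omega>), sdrop j (snd \<omega>)))
      = G (stake i (fst \<omega>)) (stake j0 (snd \<omega>)) * h (sdrop i (fst \<omega>), sdrop j0 (snd \<omega>))" for i
    by (subst suminf_finite[of "{j0}"]) (auto simp: G_def dest: fh_unique[OF j0])
  have "(\<Sum>i. \<Sum>j. G (stake i (fst \<omega>)) (stake j (snd \<omega>)) * h (sdrop i (fst \<omega>), sdrop j (snd \<omega>)))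
      = G (stake i0 (fst \<omega>)) (stake j0 (snd \<omega>)) * h (sdrop i0 (fst \<omega>), sdrop j0 (snd \<omega>))"
    unfolding inner
    by (subst suminf_finite[of "{i0}"]) (auto simp: G_def dest: fh_unique[OF i0])
  also have "\<dots> = g (Cset \<omega> \<inter> {..<s}) * indicator {\<omega>. s \<in> Cset \<omega>} \<omega> * h (shift2 s \<omega>)"
  proof -
    have "Cset \<omega> \<inter> {..<s} = psums (stake i0 (fst \<omega>)) \<inter> psums (stake j0 (snd \<omega>))"
      using fh_past[OF i0] fh_past[OF j0] by (auto simp: Cset_def)
    then show ?thesis using True i0 j0 by (simp add: G_def shift2_def fh_hit)
  qed
  finally show ?thesis ..
next
  case False
  then have nf: "\<not> (fh s (stake i (fst \<omega>)) \<and> fh s (stake j (snd \<omega>)))" for i j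
    by (auto simp: Cset_def in_R0_iff)
  have z: "G (stake i (fst \<omega>)) (stake j (snd \<omega>)) = 0" for i j
    using nf[of i j] unfolding G_def by auto
  then show ?thesis using False by simp
qed

lemma markov:
  fixes g :: "nat set \<Rightarrow> ennreal"
  assumes h[measurable]: "h \<in> borel_measurable (S2 M)"
  shows "(\<integral>\<^sup>+\<omega>. g (Cset \<omega> \<inter> {..<s}) * indicator {\<omega>. s \<in> Cset \<omega>} \<omega> * h (shift2 s \<omega>) \<partial>S2 M)
     = (\<integral>\<^sup>+\<omega>. g (Cset \<omega> \<inter> {..<s}) * indicator {\<omega>. s \<in> Cset \<omega>} \<omega> \<partial>S2 M) * integral\<^sup>N (S2 M) h"
proof -
  define G where "G \<equiv> \<lambda>xs ys. if fh s xs \<and> fh s ys then g (psums xs \<inter> psums ys) else 0"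
  have mG: "(\<lambda>\<omega>. G (stake i (fst \<omega>)) (stake j (snd \<omega>))) \<in> borel_measurable (S2 M)" for i j
    using meas_G[of "case_prod G" i j M] by simp
  have mh: "(\<lambda>\<omega>. h (sdrop i (fst \<omega>), sdrop j (snd \<omega>))) \<in> borel_measurable (S2 M)" for i j
    by measurable
  have mGh: "(\<lambda>\<omega>. G (stake i (fst \<omega>)) (stake j (snd \<omega>)) * h (sdrop i (fst \<omega>), sdrop j (snd \<omega>))) \<in> borel_measurable (S2 M)" for i j
    using mG mh by (rule borel_measurable_times_ennreal)
  have mGh': "(\<lambda>\<omega>. \<Sum>j. G (stake i (fst \<omega>)) (stake j (snd \<omega>)) * h (sdrop i (fst \<omega>), sdrop j (snd \<omega>))) \<in> borel_measurable (S2 M)" for i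
    using mGh by (rule borel_measurable_suminf_order)
  have mG': "(\<lambda>\<omega>. \<Sum>j. G (stake i (fst \<omega>)) (stake j (snd \<omega>))) \<in> borel_measurable (S2 M)" for i
    using mG by (rule borel_measurable_suminf_order)
  have "(\<integral>\<^sup>+\<omega>. g (Cset \<omega> \<inter> {..<s}) * indicator {\<omega>. s \<in> Cset \<omega>} \<omega> * h (shift2 s \<omega>) \<partial>S2 M)
      = (\<integral>\<^sup>+\<omega>. (\<Sum>i. \<Sum>j. G (stake i (fst \<omega>)) (stake j (snd \<omega>)) * h (sdrop i (fst \<omega>), sdrop j (snd \<omega>))) \<partial>S2 M)"
    unfolding G_def by (rule nn_integral_cong) (rule markov_pointwise)
  also have "\<dots> = (\<Sum>i. \<Sum>j. \<integral>\<^sup>+\<omega>. G (stake i (fst \<omega>)) (stake j (snd \<omega>)) * h (sdrop i (fst \<omega>), sdrop j (snd \<omega>)) \<partial>S2 M)"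
    using mGh mGh' by (simp add: nn_integral_suminf)
  also have "\<dots> = (\<Sum>i. \<Sum>j. (\<integral>\<^sup>+\<omega>. G (stake i (fst \<omega>)) (stake j (snd \<omega>)) \<partial>S2 M) * integral\<^sup>N (S2 M) h)"
    using pair_indep[OF h, of "case_prod G"] by simp
  also have "\<dots> = (\<Sum>i. \<Sum>j. (\<integral>\<^sup>+\<omega>. G (stake i (fst \<omega>)) (stake j (snd \<omega>)) \<partial>S2 M)) * integral\<^sup>N (S2 M) h"
    by simp
  also have "(\<Sum>i. \<Sum>j. (\<integral>\<^sup>+\<omega>. G (stake i (fst \<omega>)) (stake j (snd \<omega>)) \<partial>S2 M))
      = (\<integral>\<^sup>+\<omega>. (\<Sum>i. \<Sum>j. G (stake i (fst \<omega>)) (stake j (snd \<omega>))) \<partial>S2 M)"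
    using mG mG' by (simp add: nn_integral_suminf)
  also have "\<dots> = (\<integral>\<^sup>+\<omega>. g (Cset \<omega> \<inter> {..<s}) * indicator {\<omega>. s \<in> Cset \<omega>} \<omega> \<partial>S2 M)"
    using markov_pointwise[where h="\<lambda>_. 1" and g=g and s=s] unfolding G_def by (intro nn_integral_cong) simp
  finally show ?thesis .
qed

lemma prob_S2: "prob_space (S2 M)"
proof -
  interpret P: prob_space "SM M" by (rule prob_SM)
  interpret PP: pair_prob_space "SM M" "SM M" ..
  show ?thesis by (rule PP.P.prob_space_axioms)
qed

lemma space_S2[simp]: "space (S2 M) = UNIV"
  by (simp add: space_pair_measure)

lemma meas_R0[measurable]: "Measurable.pred (SM M) (\<lambda>a. k \<in> R0 a)"
proof -
  have "(\<lambda>a. k \<in> R0 a) = (\<lambda>a. \<exists>i. sum_list (stake i a) = k)"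
    by (auto simp: renewal_set0_def)
  also have "Measurable.pred (SM M) \<dots>"
  proof -
    have "(\<lambda>a. sum_list (stake i a)) \<in> measurable (SM M) (count_space UNIV)" for i
      using measurable_compose[OF meas_stake_SM[of i M], of sum_list "count_space UNIV"] by (simp add: o_def)
    then show ?thesis by measurable
  qed
  finally show ?thesis .
qed

lemma meas_Cset[measurable]: "Measurable.pred (S2 M) (\<lambda>\<omega>. k \<in> Cset \<omega>)"
  unfolding Cset_def by measurable

definition cnt :: "nat \<Rightarrow> nat stream \<times> nat stream \<Rightarrow> nat" where
  "cnt n \<omega> = card {k. k < n \<and> k \<in> R0 (fst \<omega>) \<inter> R0 (snd \<omega>)}"

lemma cnt_sum: "real (cnt n \<omega>) = (\<Sum>k<n. indicator {\<omega>. k \<in> Cset \<omega>} \<omega>)"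
proof (induction n)
  case 0 then show ?case by (simp add: cnt_def)
next
  case (Suc n)
  have "{k. k < Suc n \<and> k \<in> Cset \<omega>} = {k. k < n \<and> k \<in> Cset \<omega>} \<union> (if n \<in> Cset \<omega> then {n} else {})"
    by (auto simp: less_Suc_eq)
  then have "cnt (Suc n) \<omega> = cnt n \<omega> + (if n \<in> Cset \<omega> then 1 else 0)"
    by (auto simp: cnt_def Cset_def[symmetric])
  then show ?case using Suc by (simp add: indicator_def)
qed

lemma meas_cnt[measurable]: "(\<lambda>\<omega>. real (cnt n \<omega>)) \<in> borel_measurable (S2 M)"
  unfolding cnt_sum by measurable

lemma cnt_le: "cnt n \<omega> \<le> n"
proof -
  have "cnt n \<omega> \<le> card {..<n}" unfolding cnt_def by (rule card_mono) auto
  then show ?thesis by simp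
qed

lemma cnt_mono: "n \<le> n' \<Longrightarrow> cnt n \<omega> \<le> cnt n' \<omega>"
  unfolding cnt_def by (rule card_mono) auto

lemma cnt_zero[simp]: "cnt 0 \<omega> = 0" by (simp add: cnt_def)

lemma cnt_one[simp]: "cnt 1 \<omega> = 1"
proof -
  have "{k. k < 1 \<and> k \<in> R0 (fst \<omega>) \<inter> R0 (snd \<omega>)} = {0}" by auto
  then show ?thesis by (simp add: cnt_def)
qed

lemma Cset_shift2: assumes "s \<in> Cset \<omega>" shows "(s + x \<in> Cset \<omega>) \<longleftrightarrow> (x \<in> Cset (shift2 s \<omega>))"
proof -
  obtain i0 j0 where i0: "fh s (stake i0 (fst \<omega>))" and j0: "fh s (stake j0 (snd \<omega>))"
    using assms by (auto simp: Cset_def in_R0_iff)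
  have sh: "shift2 s \<omega> = (sdrop i0 (fst \<omega>), sdrop j0 (snd \<omega>))"
    using i0 j0 by (simp add: shift2_def fh_hit)
  have a: "(s + x \<in> R0 (fst \<omega>)) \<longleftrightarrow> x \<in> R0 (sdrop i0 (fst \<omega>))"
    using fh_future[OF i0] by (auto simp: set_eq_iff image_iff) (metis add_left_cancel le_add1)
  have b: "(s + x \<in> R0 (snd \<omega>)) \<longleftrightarrow> x \<in> R0 (sdrop j0 (snd \<omega>))"
    using fh_future[OF j0] by (auto simp: set_eq_iff image_iff) (metis add_left_cancel le_add1)
  show ?thesis using a b sh by (simp add: Cset_def)
qed

lemma cnt_shift: assumes "s \<in> Cset \<omega>" shows "cnt (s + m) \<omega> = cnt s \<omega> + cnt m (shift2 s \<omega>)"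
proof -
  have eq: "{k. k < s + m \<and> k \<in> Cset \<omega>} = {k. k < s \<and> k \<in> Cset \<omega>} \<union> (\<lambda>j. s + j) ` {j. j < m \<and> j \<in> Cset (shift2 s \<omega>)}"
  proof (intro equalityI subsetI)
    fix k assume k: "k \<in> {k. k < s + m \<and> k \<in> Cset \<omega>}"
    show "k \<in> {k. k < s \<and> k \<in> Cset \<omega>} \<union> (\<lambda>j. s + j) ` {j. j < m \<and> j \<in> Cset (shift2 s \<omega>)}"
    proof (cases "k < s")
      case False
      then have "k = s + (k - s)" by simp
      moreover have "k - s \<in> Cset (shift2 s \<omega>)" using Cset_shift2[OF assms, of "k - s"] k False by simp
      ultimately show ?thesis using k by (auto intro!: image_eqI[of _ _ "k - s"])
    qed (use k in auto)
  qed (use Cset_shift2[OF assms] in auto)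
  have "card {k. k < s + m \<and> k \<in> Cset \<omega>} = card {k. k < s \<and> k \<in> Cset \<omega>} + card ((\<lambda>j. s + j) ` {j. j < m \<and> j \<in> Cset (shift2 s \<omega>)})"
    unfolding eq by (rule card_Un_disjoint) auto
  also have "card ((\<lambda>j. s + j) ` {j. j < m \<and> j \<in> Cset (shift2 s \<omega>)}) = card {j. j < m \<and> j \<in> Cset (shift2 s \<omega>)}"
    by (rule card_image) auto
  finally show ?thesis by (simp add: cnt_def Cset_def)
qed

definition ee :: "real \<Rightarrow> nat \<Rightarrow> nat stream \<times> nat stream \<Rightarrow> real" where
  "ee l n \<omega> = exp (l * real (cnt n \<omega>))"

definition NC :: "nat \<Rightarrow> nat \<Rightarrow> nat stream \<times> nat stream \<Rightarrow> bool" where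
  "NC n m \<omega> \<longleftrightarrow> (\<forall>k. n \<le> k \<and> k < n + m \<longrightarrow> k \<notin> Cset \<omega>)"

definition FT :: "nat \<Rightarrow> nat \<Rightarrow> nat stream \<times> nat stream \<Rightarrow> bool" where
  "FT n t \<omega> \<longleftrightarrow> n + t \<in> Cset \<omega> \<and> NC n t \<omega>"

lemma meas_ee[measurable]: "ee l n \<in> borel_measurable (S2 M)"
  unfolding ee_def by measurable

lemma meas_NC[measurable]: "Measurable.pred (S2 M) (NC n m)"
  unfolding NC_def by measurable

lemma meas_FT[measurable]: "Measurable.pred (S2 M) (FT n t)"
  unfolding FT_def by measurable

lemma ee_pos: "0 < ee l n \<omega>" by (simp add: ee_def)

lemma ee_bound: "\<bar>ee l n \<omega>\<bar> \<le> exp (\<bar>l\<bar> * n)"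
proof -
  have "l * real (cnt n \<omega>) \<le> \<bar>l\<bar> * n"
    using cnt_le[of n \<omega>] by (smt (verit, best) abs_ge_self mult_right_mono mult_left_mono abs_ge_zero of_nat_0_le_iff of_nat_le_iff)
  then show ?thesis by (simp add: ee_def)
qed

lemma integrable_S2:
  fixes B :: real
  assumes [measurable]: "f \<in> borel_measurable (S2 M)" and b: "\<And>\<omega>. \<bar>f \<omega>\<bar> \<le> B"
  shows "integrable (S2 M) f"
proof -
  interpret P: prob_space "S2 M" by (rule prob_S2)
  show ?thesis by (rule P.integrable_const_bound[where B=B]) (use b in auto)
qed

lemma integrable_ee: "integrable (S2 M) (ee l n)"
  by (rule integrable_S2[OF meas_ee ee_bound])

lemma integrable_ee_ind:
  assumes [measurable]: "Measurable.pred (S2 M) P"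
  shows "integrable (S2 M) (\<lambda>\<omega>. ee l n \<omega> * indicator {\<omega>. P \<omega>} \<omega>)"
  by (rule integrable_S2[where B="exp (\<bar>l\<bar> * n)"]) (measurable, use ee_bound in \<open>auto simp: indicator_def\<close>)

lemma nn_real:
  assumes "integrable (S2 M) f" "\<And>\<omega>. 0 \<le> f \<omega>"
  shows "(\<integral>\<^sup>+\<omega>. ennreal (f \<omega>) \<partial>S2 M) = ennreal (integral\<^sup>L (S2 M) f)"
  using assms by (intro nn_integral_eq_integral) auto

lemma cnt_NC: "NC n t \<omega> \<Longrightarrow> cnt (n + t) \<omega> = cnt n \<omega>"
proof -
  assume nc: "NC n t \<omega>"
  have "{k. k < n + t \<and> k \<in> R0 (fst \<omega>) \<inter> R0 (snd \<omega>)} = {k. k < n \<and> k \<in> R0 (fst \<omega>) \<inter> R0 (snd \<omega>)}"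
    using nc by (auto simp: NC_def Cset_def) (meson not_le)
  then show ?thesis by (simp add: cnt_def)
qed

lemma markov_W:
  assumes "t < m"
  shows "integral\<^sup>L (S2 M) (\<lambda>\<omega>. ee l (n + m) \<omega> * indicator {\<omega>. FT n t \<omega>} \<omega>)
    = integral\<^sup>L (S2 M) (\<lambda>\<omega>. ee l n \<omega> * indicator {\<omega>. FT n t \<omega>} \<omega>) * integral\<^sup>L (S2 M) (ee l (m - t))"
proof -
  define s where "s = n + t"
  define g :: "nat set \<Rightarrow> ennreal" where
    "g D = ennreal (exp (l * real (card {k. k < n \<and> k \<in> D})) * (if (\<forall>k. n \<le> k \<and> k < s \<longrightarrow> k \<notin> D) then 1 else 0))" for D
  define h where "h \<omega> = ennreal (ee l (m - t) \<omega>)" for \<omega>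
  have [measurable]: "h \<in> borel_measurable (S2 M)" unfolding h_def by measurable
  have card_eq: "card {k. k < n \<and> k \<in> Cset \<omega> \<inter> {..<s}} = cnt n \<omega>" for \<omega>
  proof -
    have "{k. k < n \<and> k \<in> Cset \<omega> \<inter> {..<s}} = {k. k < n \<and> k \<in> R0 (fst \<omega>) \<inter> R0 (snd \<omega>)}"
      by (auto simp: s_def Cset_def)
    then show ?thesis by (simp add: cnt_def)
  qed
  have nc_eq: "(\<forall>k. n \<le> k \<and> k < s \<longrightarrow> k \<notin> Cset \<omega> \<inter> {..<s}) \<longleftrightarrow> NC n t \<omega>" for \<omega>
    by (auto simp: NC_def s_def)
  have pw1: "g (Cset \<omega> \<inter> {..<s}) * indicator {\<omega>. s \<in> Cset \<omega>} \<omega> * h (shift2 s \<omega>)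
      = ennreal (ee l (n + m) \<omega> * indicator {\<omega>. FT n t \<omega>} \<omega>)" for \<omega>
  proof (cases "FT n t \<omega>")
    case True
    then have sC: "s \<in> Cset \<omega>" and nc: "NC n t \<omega>" by (auto simp: FT_def s_def)
    have "cnt (n + m) \<omega> = cnt (s + (m - t)) \<omega>" using assms by (simp add: s_def)
    also have "\<dots> = cnt s \<omega> + cnt (m - t) (shift2 s \<omega>)" by (rule cnt_shift[OF sC])
    also have "cnt s \<omega> = cnt n \<omega>" using cnt_NC[OF nc] by (simp add: s_def)
    finally have "ee l (n + m) \<omega> = exp (l * real (cnt n \<omega>)) * ee l (m - t) (shift2 s \<omega>)"
      by (simp add: ee_def distrib_left exp_add)
    then show ?thesis using True sC nc_eq[of \<omega>] nc
      using card_eq[of \<omega>] by (simp add: g_def h_def ennreal_mult' ee_pos less_imp_le)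
  next
    case False
    then have "s \<notin> Cset \<omega> \<or> \<not> NC n t \<omega>" by (auto simp: FT_def s_def)
    then show ?thesis using False nc_eq[of \<omega>] by (auto simp: g_def)
  qed
  have pw2: "g (Cset \<omega> \<inter> {..<s}) * indicator {\<omega>. s \<in> Cset \<omega>} \<omega>
      = ennreal (ee l n \<omega> * indicator {\<omega>. FT n t \<omega>} \<omega>)" for \<omega>
  proof (cases "FT n t \<omega>")
    case True
    then have sC: "s \<in> Cset \<omega>" and nc: "NC n t \<omega>" by (auto simp: FT_def s_def)
    then show ?thesis using True nc_eq[of \<omega>] card_eq[of \<omega>] by (simp add: g_def ee_def)
  next
    case False
    then have "s \<notin> Cset \<omega> \<or> \<not> NC n t \<omega>" by (auto simp: FT_def s_def)
    then show ?thesis using False nc_eq[of \<omega>] by (auto simp: g_def)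
  qed
  have "ennreal (integral\<^sup>L (S2 M) (\<lambda>\<omega>. ee l (n + m) \<omega> * indicator {\<omega>. FT n t \<omega>} \<omega>))
      = (\<integral>\<^sup>+\<omega>. ennreal (ee l (n + m) \<omega> * indicator {\<omega>. FT n t \<omega>} \<omega>) \<partial>S2 M)"
    by (rule nn_real[symmetric]) (auto intro!: integrable_ee_ind simp: ee_pos less_imp_le)
  also have "\<dots> = (\<integral>\<^sup>+\<omega>. g (Cset \<omega> \<inter> {..<s}) * indicator {\<omega>. s \<in> Cset \<omega>} \<omega> * h (shift2 s \<omega>) \<partial>S2 M)"
    by (simp add: pw1)
  also have "\<dots> = (\<integral>\<^sup>+\<omega>. g (Cset \<omega> \<inter> {..<s}) * indicator {\<omega>. s \<in> Cset \<omega>} \<omega> \<partial>S2 M) * integral\<^sup>N (S2 M) h"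
    by (rule markov) measurable
  also have "\<dots> = ennreal (integral\<^sup>L (S2 M) (\<lambda>\<omega>. ee l n \<omega> * indicator {\<omega>. FT n t \<omega>} \<omega>)) * ennreal (integral\<^sup>L (S2 M) (ee l (m - t)))"
    unfolding pw2 h_def
    by (subst (1 2) nn_real) (auto intro!: integrable_ee_ind integrable_ee simp: ee_pos less_imp_le)
  also have "\<dots> = ennreal (integral\<^sup>L (S2 M) (\<lambda>\<omega>. ee l n \<omega> * indicator {\<omega>. FT n t \<omega>} \<omega>) * integral\<^sup>L (S2 M) (ee l (m - t)))"
    by (rule ennreal_mult''[symmetric]) (auto intro!: integral_nonneg_AE simp: ee_pos less_imp_le)
  finally show ?thesis
    by (subst (asm) ennreal_inj) (auto intro!: integral_nonneg_AE mult_nonneg_nonneg simp: ee_pos less_imp_le)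
qed



lemma partition: "indicator {\<omega>. NC n m \<omega>} \<omega> + (\<Sum>t<m. indicator {\<omega>. FT n t \<omega>} \<omega>) = (1::real)"
proof (induction m)
  case 0 then show ?case by (auto simp: NC_def indicator_def)
next
  case (Suc m)
  have "NC n (Suc m) \<omega> \<longleftrightarrow> NC n m \<omega> \<and> n + m \<notin> Cset \<omega>"
    by (auto simp: NC_def less_Suc_eq)
  then have "indicator {\<omega>. NC n (Suc m) \<omega>} \<omega> + indicator {\<omega>. FT n m \<omega>} \<omega> = (indicator {\<omega>. NC n m \<omega>} \<omega> :: real)"
    by (auto simp: FT_def indicator_def)
  then show ?case using Suc by simp
qed

definition WW :: "nat pmf \<Rightarrow> real \<Rightarrow> nat \<Rightarrow> real" where
  "WW M l n = integral\<^sup>L (S2 M) (ee l n)"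

definition AA :: "nat pmf \<Rightarrow> real \<Rightarrow> nat \<Rightarrow> nat \<Rightarrow> real" where
  "AA M l n m = integral\<^sup>L (S2 M) (\<lambda>\<omega>. ee l n \<omega> * indicator {\<omega>. NC n m \<omega>} \<omega>)"

definition BB :: "nat pmf \<Rightarrow> real \<Rightarrow> nat \<Rightarrow> nat \<Rightarrow> real" where
  "BB M l n t = integral\<^sup>L (S2 M) (\<lambda>\<omega>. ee l n \<omega> * indicator {\<omega>. FT n t \<omega>} \<omega>)"

lemma decomp_gen:
  "integral\<^sup>L (S2 M) (ee l k) = integral\<^sup>L (S2 M) (\<lambda>\<omega>. ee l k \<omega> * indicator {\<omega>. NC n m \<omega>} \<omega>)
     + (\<Sum>t<m. integral\<^sup>L (S2 M) (\<lambda>\<omega>. ee l k \<omega> * indicator {\<omega>. FT n t \<omega>} \<omega>))"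
proof -
  have "integral\<^sup>L (S2 M) (ee l k) = integral\<^sup>L (S2 M) (\<lambda>\<omega>. ee l k \<omega> * indicator {\<omega>. NC n m \<omega>} \<omega>
       + (\<Sum>t<m. ee l k \<omega> * indicator {\<omega>. FT n t \<omega>} \<omega>))"
  proof (rule Bochner_Integration.integral_cong[OF refl])
    fix \<omega>
    have "ee l k \<omega> = ee l k \<omega> * (indicator {\<omega>. NC n m \<omega>} \<omega> + (\<Sum>t<m. indicator {\<omega>. FT n t \<omega>} \<omega>))"
      by (simp add: partition)
    then show "ee l k \<omega> = ee l k \<omega> * indicator {\<omega>. NC n m \<omega>} \<omega> + (\<Sum>t<m. ee l k \<omega> * indicator {\<omega>. FT n t \<omega>} \<omega>)"
      by (simp add: distrib_left sum_distrib_left)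
  qed
  also have "\<dots> = integral\<^sup>L (S2 M) (\<lambda>\<omega>. ee l k \<omega> * indicator {\<omega>. NC n m \<omega>} \<omega>)
     + (\<Sum>t<m. integral\<^sup>L (S2 M) (\<lambda>\<omega>. ee l k \<omega> * indicator {\<omega>. FT n t \<omega>} \<omega>))"
  proof -
    have i1: "integrable (S2 M) (\<lambda>\<omega>. ee l k \<omega> * indicator {\<omega>. FT n t \<omega>} \<omega>)" for t
      by (rule integrable_ee_ind) measurable
    have i2: "integrable (S2 M) (\<lambda>\<omega>. ee l k \<omega> * indicator {\<omega>. NC n m \<omega>} \<omega>)"
      by (rule integrable_ee_ind) measurable
    have i3: "integrable (S2 M) (\<lambda>\<omega>. \<Sum>t<m. ee l k \<omega> * indicator {\<omega>. FT n t \<omega>} \<omega>)"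
      by (rule Bochner_Integration.integrable_sum) (rule i1)
    show ?thesis
      by (simp only: Bochner_Integration.integral_add[OF i2 i3] Bochner_Integration.integral_sum[OF i1])
  qed
  finally show ?thesis .
qed

lemma decomp_n: "WW M l n = AA M l n m + (\<Sum>t<m. BB M l n t)"
  unfolding WW_def AA_def BB_def by (rule decomp_gen)

lemma decomp_nm: "WW M l (n + m) = AA M l n m + (\<Sum>t<m. BB M l n t * WW M l (m - t))"
proof -
  have "integral\<^sup>L (S2 M) (\<lambda>\<omega>. ee l (n + m) \<omega> * indicator {\<omega>. NC n m \<omega>} \<omega>) = AA M l n m"
    unfolding AA_def
    by (rule Bochner_Integration.integral_cong[OF refl]) (auto simp: indicator_def ee_def cnt_NC)
  moreover have "integral\<^sup>L (S2 M) (\<lambda>\<omega>. ee l (n + m) \<omega> * indicator {\<omega>. FT n t \<omega>} \<omega>) = BB M l n t * WW M l (m - t)"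
    if "t < m" for t
    unfolding BB_def WW_def by (rule markov_W[OF that])
  ultimately show ?thesis
    unfolding WW_def[of M l "n + m"] by (subst decomp_gen[of _ _ _ n m]) simp
qed

lemma AA_nonneg: "0 \<le> AA M l n m"
  unfolding AA_def by (auto intro!: integral_nonneg_AE simp: ee_pos less_imp_le)

lemma BB_nonneg: "0 \<le> BB M l n m"
  unfolding BB_def by (auto intro!: integral_nonneg_AE simp: ee_pos less_imp_le)

lemma WW_zero: "WW M l 0 = 1"
proof -
  interpret P: prob_space "S2 M" by (rule prob_S2)
  have "ee l 0 = (\<lambda>_. 1)" by (simp add: ee_def fun_eq_iff)
  then show ?thesis using P.prob_space by (simp add: WW_def)
qed

lemma WW_one: "WW M l 1 = exp l"
proof -
  interpret P: prob_space "S2 M" by (rule prob_S2)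
  have "ee l 1 \<omega> = exp l" for \<omega> using cnt_one[of \<omega>] by (simp only: ee_def) simp
  then have "ee l 1 = (\<lambda>_. exp l)" by (simp add: fun_eq_iff)
  then show ?thesis using P.prob_space by (simp add: WW_def)
qed

lemma WW_mono_pos: "0 \<le> l \<Longrightarrow> n \<le> n' \<Longrightarrow> WW M l n \<le> WW M l n'"
  unfolding WW_def
  by (intro integral_mono integrable_ee) (auto simp: ee_def intro!: mult_left_mono cnt_mono)

lemma WW_mono_neg: "l \<le> 0 \<Longrightarrow> n \<le> n' \<Longrightarrow> WW M l n' \<le> WW M l n"
  unfolding WW_def
  by (intro integral_mono integrable_ee) (auto simp: ee_def intro!: mult_left_mono_neg cnt_mono)

lemma WW_ge1: "0 \<le> l \<Longrightarrow> 1 \<le> WW M l n"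
  using WW_mono_pos[of l 0 n M] by (simp add: WW_zero)

lemma WW_le1: "l \<le> 0 \<Longrightarrow> WW M l n \<le> 1"
  using WW_mono_neg[of l 0 n M] by (simp add: WW_zero)

lemma WW_lower: "exp (- \<bar>l\<bar> * n) \<le> WW M l n"
proof -
  interpret P: prob_space "S2 M" by (rule prob_S2)
  have "integral\<^sup>L (S2 M) (\<lambda>_. exp (- \<bar>l\<bar> * n)) \<le> WW M l n"
    unfolding WW_def
  proof (intro integral_mono integrable_ee)
    fix \<omega>
    have "- \<bar>l\<bar> * n \<le> l * real (cnt n \<omega>)"
    proof -
      have "\<bar>l * real (cnt n \<omega>)\<bar> \<le> \<bar>l\<bar> * n"
        using cnt_le[of n \<omega>] by (simp add: abs_mult mult_left_mono)
      then show ?thesis by linarith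
    qed
    then show "exp (- \<bar>l\<bar> * n) \<le> ee l n \<omega>" by (simp add: ee_def)
  qed auto
  then show ?thesis using P.prob_space by simp
qed

lemma WW_pos: "0 < WW M l n"
  using WW_lower[of l n M] exp_gt_zero[of "- \<bar>l\<bar> * n"] by linarith

lemma WW_submult: "0 \<le> l \<Longrightarrow> WW M l (n + m) \<le> WW M l n * WW M l m"
proof -
  assume l: "0 \<le> l"
  have s1: "(\<Sum>t<m. BB M l n t * WW M l (m - t)) \<le> (\<Sum>t<m. BB M l n t * WW M l m)"
    by (intro sum_mono mult_left_mono BB_nonneg WW_mono_pos[OF l]) simp
  have s2: "AA M l n m \<le> AA M l n m * WW M l m"
    using mult_left_mono[OF WW_ge1[OF l] AA_nonneg] by simp
  have "WW M l (n + m) = AA M l n m + (\<Sum>t<m. BB M l n t * WW M l (m - t))" by (rule decomp_nm)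
  also have "\<dots> \<le> AA M l n m * WW M l m + (\<Sum>t<m. BB M l n t * WW M l m)"
    using s1 s2 by linarith
  also have "\<dots> = WW M l n * WW M l m"
    by (subst decomp_n[of M l n m]) (simp add: distrib_right sum_distrib_right)
  finally show ?thesis .
qed

lemma WW_supermult: "l \<le> 0 \<Longrightarrow> WW M l n * WW M l m \<le> WW M l (n + m)"
proof -
  assume l: "l \<le> 0"
  have s1: "(\<Sum>t<m. BB M l n t * WW M l m) \<le> (\<Sum>t<m. BB M l n t * WW M l (m - t))"
    by (intro sum_mono mult_left_mono BB_nonneg WW_mono_neg[OF l]) simp
  have s2: "AA M l n m * WW M l m \<le> AA M l n m"
    using mult_left_mono[OF WW_le1[OF l] AA_nonneg] by simp
  have "WW M l n * WW M l m = AA M l n m * WW M l m + (\<Sum>t<m. BB M l n t * WW M l m)"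
    by (subst decomp_n[of M l n m]) (simp add: distrib_right sum_distrib_right)
  also have "\<dots> \<le> AA M l n m + (\<Sum>t<m. BB M l n t * WW M l (m - t))"
    using s1 s2 by linarith
  also have "\<dots> = WW M l (n + m)" by (rule decomp_nm[symmetric])
  finally show ?thesis .
qed



lemma fekete:
  fixes a :: "nat \<Rightarrow> real"
  assumes sub: "\<And>n m. a (n + m) \<le> a n + a m" and nn: "\<And>n. 0 \<le> a n"
  shows "convergent (\<lambda>n. a n / real n)"
proof -
  define X where "X = (\<lambda>n. a n / real n) ` {1..}"
  define L where "L = Inf X"
  have ne: "X \<noteq> {}" unfolding X_def by auto
  have bdd: "bdd_below X" unfolding X_def by (auto intro!: bdd_belowI[of _ 0] simp: nn)
  have low: "L \<le> a n / n" if "n \<ge> 1" for n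
    unfolding L_def by (rule cInf_lower) (use that bdd in \<open>auto simp: X_def\<close>)
  have iter: "a (q * m + r) \<le> real q * a m + a r" for q m r
  proof (induction q)
    case (Suc q)
    have "a (Suc q * m + r) = a (m + (q * m + r))" by (simp add: algebra_simps)
    also have "\<dots> \<le> a m + a (q * m + r)" by (rule sub)
    finally show ?case using Suc by (simp add: algebra_simps)
  qed simp
  have "(\<lambda>n. a n / real n) \<longlonglongrightarrow> L"
  proof (rule LIMSEQ_I)
    fix \<epsilon> :: real assume \<epsilon>: "0 < \<epsilon>"
    have "Inf X < L + \<epsilon>/2" using \<epsilon> by (simp add: L_def)
    then obtain x where "x \<in> X" "x < L + \<epsilon>/2" using cInf_less_iff[OF ne bdd] by blast
    then obtain m where m: "m \<ge> 1" "a m / m < L + \<epsilon>/2" by (auto simp: X_def)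
    define Mx where "Mx = (\<Sum>r<m. a r)"
    have Mx: "a r \<le> Mx" if "r < m" for r
      unfolding Mx_def using that by (intro member_le_sum) (auto simp: nn)
    have Mx0: "0 \<le> Mx" unfolding Mx_def by (intro sum_nonneg) (simp add: nn)
    obtain N :: nat where N: "2 * Mx / \<epsilon> < N" using reals_Archimedean2 by blast
    show "\<exists>N. \<forall>n\<ge>N. norm (a n / real n - L) < \<epsilon>"
    proof (intro exI[of _ "max N 1"] allI impI)
      fix n assume n: "max N 1 \<le> n"
      then have n1: "n \<ge> 1" and nN: "N \<le> n" by auto
      define q where "q = n div m"
      define r where "r = n mod m"
      have nqr: "n = q * m + r" by (simp add: q_def r_def)
      have r: "r < m" using m by (simp add: r_def)
      have "a n \<le> real q * a m + Mx" using iter[of q m r] Mx[OF r] nqr by simp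
      then have "a n / n \<le> (real q * a m + Mx) / n" using n1 by (simp add: divide_right_mono)
      have B: "Mx / n < \<epsilon> / 2"
      proof -
        have "2 * Mx < \<epsilon> * N" using N \<epsilon> by (simp add: divide_less_eq mult.commute)
        also have "\<epsilon> * N \<le> \<epsilon> * n" using nN \<epsilon> by simp
        finally have "2 * Mx < \<epsilon> * n" .
        then show ?thesis using n1 by (simp add: divide_less_eq mult.commute)
      qed
      have "a n / n < L + \<epsilon>"
      proof -
        have "a n / n \<le> (real (q * m) / n) * (a m / m) + Mx / n"
          using \<open>a n / n \<le> (real q * a m + Mx) / n\<close> m n1 by (simp add: field_simps)
        also have "\<dots> \<le> a m / m + Mx / n"
        proof -
          have "(real (q * m) / n) * (a m / m) \<le> a m / m"
          proof (rule mult_left_le_one_le)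
            show "0 \<le> a m / m" using nn[of m] by simp
            show "0 \<le> real (q * m) / real n" by simp
            have "q * m \<le> n" using nqr by simp
            then have "real (q * m) \<le> real n" by (simp only: of_nat_le_iff)
            then show "real (q * m) / real n \<le> 1" using n1 by (simp add: divide_le_eq del: of_nat_mult)
          qed
          then show ?thesis by simp
        qed
        finally show ?thesis using m B by linarith
      qed
      moreover have "L \<le> a n / n" using low[OF n1] .
      ultimately show "norm (a n / real n - L) < \<epsilon>" using \<epsilon> by simp
    qed
  qed
  then show ?thesis by (rule convergentI)
qed

lemma renewal_bound:
  fixes W A B :: "nat \<Rightarrow> real" and c F \<theta> K0 :: real
  assumes rec: "\<And>m. W (Suc m) = A m + (\<Sum>t<m. B t * W (m - t))"
    and A: "\<And>m. A m \<le> c" and B: "\<And>t. 0 \<le> B t"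
    and sumB: "\<And>m. (\<Sum>t<m. B t * exp (- F * real (Suc t))) \<le> \<theta>"
    and F: "0 \<le> F" and W0: "W 0 \<le> K0" and c: "c \<le> K0 * (1 - \<theta>)"
    and K0: "0 \<le> K0" and \<theta>1: "\<theta> \<le> 1"
  shows "W n \<le> K0 * exp (F * n)"
proof (induction n rule: less_induct)
  case (less n)
  show ?case
  proof (cases n)
    case 0 then show ?thesis using W0 by simp
  next
    case (Suc m)
    have E: "exp (F * real (m - t)) = exp (F * real (Suc m)) * exp (- F * real (Suc t))" if "t < m" for t
    proof -
      have "F * real (m - t) = F * real (Suc m) + (- F * real (Suc t))"
        using that by (simp add: of_nat_diff algebra_simps)
      then show ?thesis by (simp only: exp_add)
    qed
    have "(\<Sum>t<m. B t * W (m - t)) \<le> (\<Sum>t<m. B t * (K0 * exp (F * real (m - t))))"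
      by (intro sum_mono mult_left_mono less.IH B) (auto simp: Suc)
    also have "\<dots> = (\<Sum>t<m. K0 * exp (F * real (Suc m)) * (B t * exp (- F * real (Suc t))))"
    proof (intro sum.cong refl)
      fix t assume "t \<in> {..<m}"
      then have "t < m" by simp
      show "B t * (K0 * exp (F * real (m - t))) = K0 * exp (F * real (Suc m)) * (B t * exp (- F * real (Suc t)))"
        unfolding E[OF \<open>t < m\<close>] by (simp only: ac_simps)
    qed
    also have "\<dots> = K0 * exp (F * real (Suc m)) * (\<Sum>t<m. B t * exp (- F * real (Suc t)))"
      by (simp only: sum_distrib_left)
    also have "\<dots> \<le> K0 * exp (F * real (Suc m)) * \<theta>"
      using K0 by (intro mult_left_mono sumB) auto
    finally have S: "(\<Sum>t<m. B t * W (m - t)) \<le> K0 * exp (F * real (Suc m)) * \<theta>" .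
    have "1 \<le> exp (F * real (Suc m))" using F by simp
    then have "c \<le> K0 * (1 - \<theta>) * exp (F * real (Suc m))"
      using c K0 \<theta>1 by (smt (verit) mult_le_cancel_left1 mult_nonneg_nonneg)
    then have "W (Suc m) \<le> K0 * (1 - \<theta>) * exp (F * real (Suc m)) + K0 * exp (F * real (Suc m)) * \<theta>"
      using rec[of m] A[of m] S by linarith
    also have "\<dots> = K0 * exp (F * real (Suc m))" by (simp add: algebra_simps)
    finally show ?thesis using Suc by simp
  qed
qed



lemma sets_SM: "sets (SM M) = sets (stream_space (count_space UNIV))"
  by (rule sets_stream_space_cong) simp

lemma meas_sstart_SM[measurable]: "sstart UNIV xs \<in> sets (SM K)"
  using sets_sstart[of UNIV xs] by (simp add: sets_SM)

lemma set_smap_sstart: fixes f :: "nat \<Rightarrow> nat" shows "{\<omega>. smap f \<omega> \<in> sstart UNIV xs} \<in> sets (SM K)"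
proof -
  have mf: "smap f \<in> measurable (SM K) (SM (map_pmf f K))"
    by (rule measurable_smap) simp
  have "smap f -` sstart UNIV xs \<inter> space (SM K) \<in> sets (SM K)"
    by (rule measurable_sets[OF mf]) simp
  then show ?thesis by (simp add: vimage_def)
qed

lemma emeasure_smap_sstart:
  fixes f :: "nat \<Rightarrow> nat" shows "emeasure (SM K) {\<omega>. smap f \<omega> \<in> sstart UNIV xs} = emeasure (SM (map_pmf f K)) (sstart UNIV xs)"
proof (induction xs)
  case Nil
  interpret P1: prob_space "SM K" by (rule prob_SM)
  interpret P2: prob_space "SM (map_pmf f K)" by (rule prob_SM)
  show ?case using P1.emeasure_space_1 P2.emeasure_space_1 by simp
next
  case (Cons x xs)
  have "emeasure (SM K) {\<omega>. smap f \<omega> \<in> sstart UNIV (x # xs)}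
      = (\<integral>\<^sup>+t. emeasure (SM K) {\<omega> \<in> space (SM K). t ## \<omega> \<in> {\<omega>. smap f \<omega> \<in> sstart UNIV (x # xs)}} \<partial>measure_pmf K)"
    by (rule prob_space.emeasure_stream_space[OF measure_pmf.prob_space_axioms]) (rule set_smap_sstart)
  also have "\<dots> = (\<integral>\<^sup>+t. indicator {t. f t = x} t * emeasure (SM K) {\<omega>. smap f \<omega> \<in> sstart UNIV xs} \<partial>measure_pmf K)"
    by (intro nn_integral_cong) (auto simp: indicator_def)
  also have "\<dots> = (\<integral>\<^sup>+t. indicator {x} t * emeasure (SM (map_pmf f K)) (sstart UNIV xs) \<partial>measure_pmf (map_pmf f K))"
    by (simp add: Cons indicator_def)
  also have "\<dots> = (\<integral>\<^sup>+t. emeasure (SM (map_pmf f K)) {\<omega> \<in> space (SM (map_pmf f K)). t ## \<omega> \<in> sstart UNIV (x # xs)} \<partial>measure_pmf (map_pmf f K))"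
    by (intro nn_integral_cong) (auto simp: indicator_def)
  also have "\<dots> = emeasure (SM (map_pmf f K)) (sstart UNIV (x # xs))"
    by (rule prob_space.emeasure_stream_space[OF measure_pmf.prob_space_axioms, symmetric]) simp
  finally show ?case .
qed

lemma SM_map: fixes f :: "nat \<Rightarrow> nat" shows "SM (map_pmf f K) = distr (SM K) (SM (map_pmf f K)) (smap f)"
proof (rule stream_space_eq_sstart[of UNIV])
  have mf[measurable]: "smap f \<in> measurable (SM K) (SM (map_pmf f K))"
    by (rule measurable_smap) simp
  show "prob_space (SM (map_pmf f K))" by (rule prob_SM)
  show "prob_space (distr (SM K) (SM (map_pmf f K)) (smap f))"
    by (rule prob_space.prob_space_distr[OF prob_SM mf])
  show "sets (SM (map_pmf f K)) = sets (stream_space (count_space UNIV))" by (rule sets_SM)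
  show "sets (distr (SM K) (SM (map_pmf f K)) (smap f)) = sets (stream_space (count_space UNIV))"
    by (simp add: sets_SM)
  fix xs :: "nat list"
  have "emeasure (distr (SM K) (SM (map_pmf f K)) (smap f)) (sstart UNIV xs) = emeasure (SM K) (smap f -` sstart UNIV xs \<inter> space (SM K))"
    by (rule emeasure_distr) (simp_all add: mf)
  also have "\<dots> = emeasure (SM K) {\<omega>. smap f \<omega> \<in> sstart UNIV xs}" by (simp add: vimage_def)
  finally show "emeasure (SM (map_pmf f K)) (sstart UNIV xs) = emeasure (distr (SM K) (SM (map_pmf f K)) (smap f)) (sstart UNIV xs)"
    by (simp add: emeasure_smap_sstart)
qed simp_all

lemma S2_map: fixes f :: "nat \<Rightarrow> nat" shows "S2 (map_pmf f K) = distr (S2 K) (S2 (map_pmf f K)) (\<lambda>(x, y). (smap f x, smap f y))"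
proof -
  have mf[measurable]: "smap f \<in> measurable (SM K) (SM (map_pmf f K))"
    by (rule measurable_smap) simp
  have sf: "sigma_finite_measure (distr (SM K) (SM (map_pmf f K)) (smap f))"
    unfolding SM_map[symmetric] using prob_SM prob_space_imp_sigma_finite by blast
  show ?thesis
    by (subst (1 2) SM_map) (rule pair_measure_distr[OF mf mf sf])
qed

lemma meas_psum[measurable]: "(\<lambda>a. sum_list (stake i a)) \<in> measurable (SM M) (count_space UNIV)"
  using measurable_compose[OF meas_stake_SM[of i M], of sum_list "count_space UNIV"] by (simp add: o_def)

lemma Pset_sets: "{\<omega> \<in> space (S2 K). renewal_set_pos (fst \<omega>) \<inter> renewal_set_pos (snd \<omega>) \<noteq> {}} \<in> sets (S2 K)"
proof -
  have "(\<lambda>\<omega>. renewal_set_pos (fst \<omega>) \<inter> renewal_set_pos (snd \<omega>) \<noteq> {})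
     = (\<lambda>\<omega>. \<exists>x::nat. (\<exists>k. sum_list (stake (Suc k) (fst \<omega>)) = x) \<and> (\<exists>j. sum_list (stake (Suc j) (snd \<omega>)) = x))"
    by (auto simp: renewal_set_pos_def fun_eq_iff)
  moreover have "Measurable.pred (S2 K) (\<lambda>\<omega>. \<exists>x::nat. (\<exists>k. sum_list (stake (Suc k) (fst \<omega>)) = x) \<and> (\<exists>j. sum_list (stake (Suc j) (snd \<omega>)) = x))"
    by measurable
  ultimately show ?thesis by (simp add: pred_def)
qed

lemma key_trunc:
  assumes "1 \<le> k" "k < tr" "k \<in> R0 (smap (\<lambda>n. min n tr) a)"
  shows "k \<in> renewal_set_pos a"
proof -
  obtain i where i: "k = sum_list (map (\<lambda>n. min n tr) (stake i a))"
    using assms(3) by (auto simp: renewal_set0_def)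
  have "i \<noteq> 0"
  proof
    assume "i = 0" then have "k = 0" using i by simp
    then show False using assms(1) by simp
  qed
  have "map (\<lambda>n. min n tr) (stake i a) = stake i a"
  proof (rule map_idI)
    fix x assume x: "x \<in> set (stake i a)"
    have "min x tr \<le> k" unfolding i by (rule member_le_sum_list) (use x in auto)
    then show "min x tr = x" using assms(2) by (cases "x \<le> tr") (auto simp: min_def)
  qed
  with i have "k = sum_list (stake (Suc (i - 1)) a)" using \<open>i \<noteq> 0\<close> by simp
  then show ?thesis by (auto simp: renewal_set_pos_def)
qed

lemma trunc_event:
  "measure (S2 (trunc_pmf K tr)) {\<omega> \<in> space (S2 (trunc_pmf K tr)). \<not> NC 1 (tr - 1) \<omega>} \<le> p_intersect K"
proof -
  define f where "f = (\<lambda>n::nat. min n tr)"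
  define \<phi> where "\<phi> = (\<lambda>(x, y). (smap f x, smap f y))"
  define E where "E = {\<omega> \<in> space (S2 (trunc_pmf K tr)). \<not> NC 1 (tr - 1) \<omega>}"
  define P where "P = {\<omega> \<in> space (S2 K). renewal_set_pos (fst \<omega>) \<inter> renewal_set_pos (snd \<omega>) \<noteq> {}}"
  have mf: "smap f \<in> measurable (SM K) (SM (map_pmf f K))"
    by (rule measurable_smap) simp
  have m\<phi>: "\<phi> \<in> measurable (S2 K) (S2 (map_pmf f K))"
    unfolding \<phi>_def using mf by measurable
  have E: "E \<in> sets (S2 (map_pmf f K))" unfolding E_def f_def trunc_pmf_def by measurable
  interpret PK: prob_space "S2 K" by (rule prob_S2)
  have "measure (S2 (trunc_pmf K tr)) E = measure (distr (S2 K) (S2 (map_pmf f K)) \<phi>) E"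
    unfolding trunc_pmf_def f_def[symmetric] \<phi>_def by (subst S2_map) simp
  also have "\<dots> = measure (S2 K) (\<phi> -` E \<inter> space (S2 K))"
    by (rule measure_distr[OF m\<phi> E])
  also have "\<dots> \<le> measure (S2 K) P"
  proof (rule PK.finite_measure_mono)
    show "P \<in> sets (S2 K)" unfolding P_def by (rule Pset_sets)
    show "\<phi> -` E \<inter> space (S2 K) \<subseteq> P"
    proof
      fix \<omega> assume "\<omega> \<in> \<phi> -` E \<inter> space (S2 K)"
      then obtain a b where ab: "\<omega> = (a, b)" and ne: "\<not> NC 1 (tr - 1) (smap f a, smap f b)"
        by (cases \<omega>) (auto simp: E_def \<phi>_def)
      then obtain k where k: "1 \<le> k" "k < 1 + (tr - 1)" "k \<in> R0 (smap f a)" "k \<in> R0 (smap f b)"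
        by (auto simp: NC_def Cset_def)
      have "k < tr" using k by linarith
      then have "k \<in> renewal_set_pos a" "k \<in> renewal_set_pos b"
        using key_trunc[of k tr] k unfolding f_def by auto
      then show "\<omega> \<in> P" using ab by (auto simp: P_def)
    qed
  qed
  also have "\<dots> = p_intersect K" unfolding P_def p_intersect_def two_renewals_def ..
  finally show ?thesis unfolding E_def .
qed



lemma AA_one: "AA M l 1 m = exp l * measure (S2 M) {\<omega> \<in> space (S2 M). NC 1 m \<omega>}"
proof -
  have "ee l 1 \<omega> = exp l" for \<omega> using cnt_one[of \<omega>] by (simp only: ee_def) simp
  then have "AA M l 1 m = integral\<^sup>L (S2 M) (\<lambda>\<omega>. exp l * indicator {\<omega> \<in> space (S2 M). NC 1 m \<omega>} \<omega>)"
    by (simp add: AA_def)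
  also have "\<dots> = exp l * measure (S2 M) {\<omega> \<in> space (S2 M). NC 1 m \<omega>}"
  proof -
    have "{\<omega> \<in> space (S2 M). NC 1 m \<omega>} \<in> sets (S2 M)" by measurable
    then show ?thesis by simp
  qed
  finally show ?thesis .
qed

lemma sumBB_T: "(\<Sum>t<m. BB M l 1 t) = exp l * measure (S2 M) {\<omega> \<in> space (S2 M). \<not> NC 1 m \<omega>}"
proof -
  interpret P: prob_space "S2 M" by (rule prob_S2)
  have A: "{\<omega> \<in> space (S2 M). NC 1 m \<omega>} \<in> sets (S2 M)" by measurable
  have "space (S2 M) - {\<omega> \<in> space (S2 M). NC 1 m \<omega>} = {\<omega> \<in> space (S2 M). \<not> NC 1 m \<omega>}" by auto
  then have c: "measure (S2 M) {\<omega> \<in> space (S2 M). \<not> NC 1 m \<omega>} = 1 - measure (S2 M) {\<omega> \<in> space (S2 M). NC 1 m \<omega>}"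
    using P.prob_compl[OF A] by simp
  have "exp l = AA M l 1 m + (\<Sum>t<m. BB M l 1 t)" using decomp_n[of M l 1 m] by (simp only: WW_one)
  then show ?thesis unfolding AA_one c by (simp add: algebra_simps)
qed

lemma sumBB_le: "(\<Sum>t<m. BB M l 1 t) \<le> exp l"
  using sumBB_T[where m=m and M=M and l=l] prob_space.prob_le_1[OF prob_S2] by (simp add: mult_left_le)

lemma main_bound:
  fixes K :: "nat pmf" and tr :: nat and l C :: real
  assumes tr: "1 \<le> tr" and C0: "0 \<le> C" and \<theta>1: "exp l * (p_intersect K + exp (- C)) < 1"
  shows "\<exists>K0>0. \<forall>n. WW (trunc_pmf K tr) l n \<le> K0 * exp (C / tr * n)"
proof -
  define Q where "Q = trunc_pmf K tr"
  define \<theta> where "\<theta> = exp l * (p_intersect K + exp (- C))"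
  define K0 where "K0 = max 1 (exp l / (1 - \<theta>))"
  define F where "F = C / tr"
  define T where "T = tr - 1"
  have F0: "0 \<le> F" using C0 by (simp add: F_def)
  have FT: "F * tr = C" using tr by (simp add: F_def)
  have sumT: "(\<Sum>t<T. BB Q l 1 t) \<le> exp l * p_intersect K"
    using sumBB_T[where m=T and M=Q and l=l] trunc_event[of K tr] unfolding Q_def T_def
    by (simp add: mult_left_mono)
  have sumB: "(\<Sum>t<m. BB Q l 1 t * exp (- F * real (Suc t))) \<le> \<theta>" for m
  proof -
    have "(\<Sum>t<m. BB Q l 1 t * exp (- F * real (Suc t)))
        \<le> (\<Sum>t<m. (if t < T then BB Q l 1 t else 0) + BB Q l 1 t * exp (- C))"
    proof (rule sum_mono)
      fix t assume "t \<in> {..<m}"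
      have B0: "0 \<le> BB Q l 1 t" by (rule BB_nonneg)
      show "BB Q l 1 t * exp (- F * real (Suc t)) \<le> (if t < T then BB Q l 1 t else 0) + BB Q l 1 t * exp (- C)"
      proof (cases "t < T")
        case True
        have "exp (- F * real (Suc t)) \<le> 1" using F0 by simp
        then have "BB Q l 1 t * exp (- F * real (Suc t)) \<le> BB Q l 1 t"
          using B0 by (simp add: mult_left_le)
        moreover have "0 \<le> BB Q l 1 t * exp (- C)" using B0 by simp
        ultimately show ?thesis using True by simp
      next
        case False
        then have "tr \<le> Suc t" using tr by (simp add: T_def)
        then have "F * tr \<le> F * real (Suc t)" using F0 by (intro mult_left_mono) auto
        then have "exp (- F * real (Suc t)) \<le> exp (- C)" using FT by simp
        then show ?thesis using False B0 by (simp add: mult_left_mono)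
      qed
    qed
    also have "\<dots> = (\<Sum>t<m. (if t < T then BB Q l 1 t else 0)) + exp (- C) * (\<Sum>t<m. BB Q l 1 t)"
      by (simp add: sum.distrib sum_distrib_left mult.commute)
    also have "(\<Sum>t<m. (if t < T then BB Q l 1 t else 0)) \<le> (\<Sum>t<T. BB Q l 1 t)"
    proof -
      have "(\<Sum>t<m. (if t < T then BB Q l 1 t else 0)) = (\<Sum>t\<in>{..<m} \<inter> {t. t < T}. BB Q l 1 t)"
        by (simp add: sum.If_cases)
      also have "\<dots> \<le> (\<Sum>t<T. BB Q l 1 t)"
        by (rule sum_mono2) (auto simp: BB_nonneg)
      finally show ?thesis .
    qed
    also have "exp (- C) * (\<Sum>t<m. BB Q l 1 t) \<le> exp (- C) * exp l"
      by (intro mult_left_mono sumBB_le) simp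
    finally show ?thesis using sumT by (simp add: \<theta>_def algebra_simps)
  qed
  have \<theta>: "\<theta> < 1" using \<theta>1 by (simp add: \<theta>_def)
  have K0: "0 < K0" "1 \<le> K0" by (auto simp: K0_def)
  have c: "exp l \<le> K0 * (1 - \<theta>)"
  proof -
    have "exp l = exp l / (1 - \<theta>) * (1 - \<theta>)" using \<theta> by simp
    also have "\<dots> \<le> K0 * (1 - \<theta>)" using \<theta> by (intro mult_right_mono) (auto simp: K0_def)
    finally show ?thesis .
  qed
  have "WW Q l n \<le> K0 * exp (F * n)" for n
  proof (rule renewal_bound[where A="AA Q l 1" and B="BB Q l 1" and c="exp l" and \<theta>=\<theta>])
    show "WW Q l (Suc m) = AA Q l 1 m + (\<Sum>t<m. BB Q l 1 t * WW Q l (m - t))" for m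
      using decomp_nm[of Q l 1 m] by simp
    show "AA Q l 1 m \<le> exp l" for m
    proof -
      have "exp l = AA Q l 1 m + (\<Sum>t<m. BB Q l 1 t)" using decomp_n[of Q l 1 m] by (simp only: WW_one)
      moreover have "0 \<le> (\<Sum>t<m. BB Q l 1 t)" by (intro sum_nonneg BB_nonneg)
      ultimately show ?thesis by linarith
    qed
    show "0 \<le> BB Q l 1 t" for t by (rule BB_nonneg)
    show "(\<Sum>t<m. BB Q l 1 t * exp (- F * real (Suc t))) \<le> \<theta>" for m by (rule sumB)
    show "0 \<le> F" by (rule F0)
    show "WW Q l 0 \<le> K0" using K0 by (simp add: WW_zero)
    show "exp l \<le> K0 * (1 - \<theta>)" by (rule c)
    show "0 \<le> K0" using K0 by simp
    show "\<theta> \<le> 1" using \<theta> by simp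
  qed
  then show ?thesis using K0 unfolding Q_def F_def by blast
qed

lemma f2_eq: "f2 K tr l = lim (\<lambda>n. ln (WW (trunc_pmf K tr) l n) / real n)"
  unfolding f2_def WW_def ee_def cnt_def two_renewals_def ..

lemma WW_conv: "convergent (\<lambda>n. ln (WW M l n) / real n)"
proof (cases "0 \<le> l")
  case True
  show ?thesis
  proof (rule fekete)
    fix n m
    have "ln (WW M l (n + m)) \<le> ln (WW M l n * WW M l m)"
      using WW_submult[OF True] WW_pos by (simp add: ln_le_cancel_iff)
    also have "\<dots> = ln (WW M l n) + ln (WW M l m)" by (rule ln_mult_pos[OF WW_pos WW_pos])
    finally show "ln (WW M l (n + m)) \<le> ln (WW M l n) + ln (WW M l m)" .
  next
    fix n show "0 \<le> ln (WW M l n)" using WW_ge1[OF True] by simp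
  qed
next
  case False
  then have l: "l \<le> 0" by simp
  have "convergent (\<lambda>n. - ln (WW M l n) / real n)"
  proof (rule fekete)
    fix n m
    have "ln (WW M l n * WW M l m) \<le> ln (WW M l (n + m))"
      using WW_supermult[OF l] WW_pos by (simp add: ln_le_cancel_iff)
    moreover have "ln (WW M l n * WW M l m) = ln (WW M l n) + ln (WW M l m)" by (rule ln_mult_pos[OF WW_pos WW_pos])
    ultimately show "- ln (WW M l (n + m)) \<le> - ln (WW M l n) + - ln (WW M l m)" by linarith
  next
    fix n show "0 \<le> - ln (WW M l n)" using WW_le1[OF l] WW_pos[of M l n] by simp
  qed
  then have "convergent (\<lambda>n. - (ln (WW M l n) / real n))" by simp
  then show ?thesis using convergent_minus_iff by blast
qed

lemma f2_le:
  fixes K :: "nat pmf" and tr :: nat and l C :: real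
  assumes tr: "1 \<le> tr" and C0: "0 \<le> C" and \<theta>1: "exp l * (p_intersect K + exp (- C)) < 1"
  shows "real tr * f2 K tr l \<le> C"
proof -
  obtain K0 where K0: "0 < K0" and bd: "\<And>n. WW (trunc_pmf K tr) l n \<le> K0 * exp (C / tr * n)"
    using main_bound[OF tr C0 \<theta>1] by blast
  define W where "W = WW (trunc_pmf K tr) l"
  define F where "F = C / tr"
  have conv: "(\<lambda>n. ln (W n) / real n) \<longlonglongrightarrow> f2 K tr l"
    unfolding f2_eq W_def using WW_conv by (simp add: convergent_LIMSEQ_iff)
  have lim2: "(\<lambda>n. ln K0 / real n + F) \<longlonglongrightarrow> 0 + F"
    by (intro tendsto_add lim_const_over_n tendsto_const)
  have "f2 K tr l \<le> 0 + F"
  proof (rule LIMSEQ_le[OF conv lim2])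
    show "\<exists>N. \<forall>n\<ge>N. ln (W n) / real n \<le> ln K0 / real n + F"
    proof (intro exI[of _ 1] allI impI)
      fix n :: nat assume n: "1 \<le> n"
      have "ln (W n) \<le> ln (K0 * exp (F * n))"
        using bd[of n] WW_pos K0 by (simp add: W_def F_def)
      also have "\<dots> = ln K0 + F * n" using K0 by (simp add: ln_mult_pos)
      finally have "ln (W n) \<le> ln K0 + F * n" .
      then have "ln (W n) / n \<le> (ln K0 + F * n) / n" using n by (simp add: divide_right_mono)
      also have "\<dots> = ln K0 / n + F" using n by (simp add: field_simps)
      finally show "ln (W n) / real n \<le> ln K0 / real n + F" .
    qed
  qed
  then have "real tr * f2 K tr l \<le> real tr * F" using tr by (simp add: mult_left_mono)
  also have "\<dots> = C" using tr by (simp add: F_def)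
  finally show ?thesis .
qed

theorem lemmaA1:
  fixes K :: "nat pmf"
  assumes K0: "pmf K 0 = 0"
    and tail: "\<exists>\<alpha>::real. \<alpha> \<ge> 0 \<and> ((\<lambda>n. ln (pmf K n) / ln (real n)) \<longlongrightarrow> - (1 + \<alpha>)) at_top"
    and lt1: "p_intersect K < 1"
  shows "\<forall>lam < lambda0 K. bdd_above {real tr * f2 K tr lam | tr. tr \<ge> 1}"
proof (intro allI impI)
  fix lam assume lam: "lam < lambda0 K"
  define p where "p = p_intersect K"
  have p0: "0 \<le> p" unfolding p_def p_intersect_def by simp
  have "p < exp (- lam)"
  proof (cases "p = 0")
    case False
    then have "0 < p" using p0 by simp
    have "lam < - ln p" using lam by (simp add: lambda0_def p_def)
    then have "ln p < - lam" by simp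
    then have "exp (ln p) < exp (- lam)" by (rule exp_less_mono)
    then show ?thesis using \<open>0 < p\<close> by simp
  qed simp
  define d where "d = exp (- lam) - p"
  have d: "0 < d" using \<open>p < exp (- lam)\<close> by (simp add: d_def)
  define C where "C = max 0 (- ln (d / 2))"
  have C0: "0 \<le> C" by (simp add: C_def)
  have eC: "exp (- C) \<le> d / 2"
  proof (cases "0 \<le> - ln (d / 2)")
    case True
    then have "C = - ln (d / 2)" by (simp add: C_def)
    then show ?thesis using d by simp
  next
    case False
    then have "C = 0" by (simp add: C_def)
    moreover have "1 < d / 2"
    proof (rule ln_gt_zero_imp_gt_one)
      show "0 < ln (d / 2)" using False by linarith
      show "0 < d / 2" using d by simp
    qed
    ultimately show ?thesis by simp
  qed
  have \<theta>1: "exp lam * (p_intersect K + exp (- C)) < 1"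
  proof -
    have "p + exp (- C) < exp (- lam)" using eC d by (simp add: d_def)
    then have "exp lam * (p + exp (- C)) < exp lam * exp (- lam)" by simp
    also have "\<dots> = 1" by (simp flip: exp_add)
    finally show ?thesis by (simp add: p_def)
  qed
  show "bdd_above {real tr * f2 K tr lam | tr. tr \<ge> 1}"
  proof (rule bdd_aboveI)
    fix x assume "x \<in> {real tr * f2 K tr lam | tr. tr \<ge> 1}"
    then obtain tr where "x = real tr * f2 K tr lam" "1 \<le> tr" by blast
    then show "x \<le> C" using f2_le[OF _ C0 \<theta>1, of tr] by simp
  qed
qed

end
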